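(* Let $H$ be a separable real Hilbert space with complete orthonormal system $(e_k)_{k\ge1}$, $F\subset H$ compact, $\mu$ a probability measure on $F$, and $d,n\in\mathbb{N}$ with $\mathbf{M}_{d,n}(\mu)$ nonsingular. Then for every $h\in H$ and $\delta>0$ such that $\min_{f\in F}|\pi_n(f-h)|\ge\delta$, \[p^\mu_{d,n}(h)\ \ge\ 2^{\frac{\delta}{\delta+\operatorname{diam}F}\,d-3},\] where $\operatorname{diam}F=\max_{f_1,f_2\in F}|f_1-f_2|$.
   Context: $|\cdot|$ is the norm of $H$ and $\pi_n(f)=\sum_{k=1}^n\langle f,e_k\rangle e_k$. $c_0(\mathbb{N})$ is the set of sequences of nonnegative integers with finitely many nonzero entries; for $a\in c_0(\mathbb{N})$, $f^a:=\prod_k\langle f,e_k\rangle^{a_k}$. A polynomial on $H$ is a finite linear combination $p(f)=\sum_a p_a f^a$; its algebraic degree is $\max\{\sum_k a_k: p_a\neq0\}$ and its harmonic degree is $\max\{k: a_k\neq0\text{ for some } a\text{ with } p_a\neq0\}$. $P_{d,n}$ is the space of polynomials of algebraic degree at most $d$ and harmonic degree at most $n$. $\boldsymbol{v}_{d,n}(\cdot)$ is a vector whose entries form a basis of $P_{d,n}$; $\mathbf{M}_{d,n}(\mu)=\int_F \boldsymbol{v}_{d,n}(f)\boldsymbol{v}_{d,n}(f)^T\,d\mu(f)$; the Christoffel–Darboux polynomial is $p^\mu_{d,n}(f)=\boldsymbol{v}_{d,n}(f)^T\mathbf{M}_{d,n}(\mu)^{-1}\boldsymbol{v}_{d,n}(f)$.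 *)

theory Defs
  imports "HOL-Probability.Probability"
begin

definition complete_orthonormal_system :: "(nat \<Rightarrow> 'a::{real_inner,complete_space}) \<Rightarrow> bool" where
  "complete_orthonormal_system e \<longleftrightarrow>
     (\<forall>i\<ge>1. \<forall>j\<ge>1. e i \<bullet> e j = (if i = j then 1 else 0)) \<and>
     closure (span (e ` {1..})) = UNIV"

definition proj_n :: "(nat \<Rightarrow> 'a::real_inner) \<Rightarrow> nat \<Rightarrow> 'a \<Rightarrow> 'a" where
  "proj_n e n f = (\<Sum>k=1..n. (f \<bullet> e k) *\<^sub>R e k)"

definition monom_H :: "(nat \<Rightarrow> 'a::real_inner) \<Rightarrow> (nat \<Rightarrow> nat) \<Rightarrow> 'a \<Rightarrow> real" where
  "monom_H e a f = (\<Prod>k\<in>{k. k \<ge> 1 \<and> a k \<noteq> 0}. (f \<bullet> e k) ^ a k)"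

text \<open>Exponents of algebraic degree \<le> d and harmonic degree \<le> n.\<close>
definition exps :: "nat \<Rightarrow> nat \<Rightarrow> (nat \<Rightarrow> nat) set" where
  "exps d n = {a. (\<forall>k. (k < 1 \<or> k > n) \<longrightarrow> a k = 0) \<and> (\<Sum>k=1..n. a k) \<le> d}"

definition P_dn :: "(nat \<Rightarrow> 'a::real_inner) \<Rightarrow> nat \<Rightarrow> nat \<Rightarrow> ('a \<Rightarrow> real) set" where
  "P_dn e d n = {p. \<exists>c. p = (\<lambda>f. \<Sum>a\<in>exps d n. c a * monom_H e a f)}"

definition is_basis_vec :: "('a \<Rightarrow> real ^ 'i::finite) \<Rightarrow> ('a \<Rightarrow> real) set \<Rightarrow> bool" where
  "is_basis_vec v P \<longleftrightarrow>
     (\<forall>i. (\<lambda>f. v f $ i) \<in> P) \<and>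
     (\<forall>c::'i \<Rightarrow> real. (\<forall>f. (\<Sum>i\<in>UNIV. c i * v f $ i) = 0) \<longrightarrow> (\<forall>i. c i = 0)) \<and>
     (\<forall>p\<in>P. \<exists>c::'i \<Rightarrow> real. p = (\<lambda>f. \<Sum>i\<in>UNIV. c i * v f $ i))"

definition moment_matrix :: "'a measure \<Rightarrow> ('a \<Rightarrow> real ^ 'i::finite) \<Rightarrow> real ^ 'i ^ 'i" where
  "moment_matrix \<mu> v = (\<chi> i j. LINT f|\<mu>. v f $ i * v f $ j)"

definition CD_poly :: "'a measure \<Rightarrow> ('a \<Rightarrow> real ^ 'i::finite) \<Rightarrow> 'a \<Rightarrow> real" where
  "CD_poly \<mu> v h = v h \<bullet> (matrix_inv (moment_matrix \<mu> v) *v v h)"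

end

theory Submission
  imports Defs
begin

lemma exps_support: assumes "a \<in> exps d n" "k \<notin> {1..n}" shows "a k = 0"
proof -
  have K: "k < 1 \<or> k > n" using assms(2) by auto
  have H: "\<forall>k. (k < 1 \<or> k > n) \<longrightarrow> a k = 0" using assms(1) unfolding exps_def by simp
  show ?thesis by (rule H[rule_format, OF K])
qed

lemma exps_sum: "a \<in> exps d n \<Longrightarrow> (\<Sum>k=1..n. a k) \<le> d"
  unfolding exps_def by simp

lemma exps_I: "(\<And>k. k \<notin> {1..n} \<Longrightarrow> a k = 0) \<Longrightarrow> (\<Sum>k=1..n. a k) \<le> d \<Longrightarrow> a \<in> exps d n"
  unfolding exps_def by (simp add: not_le Suc_le_eq)

lemma exps_finite: "finite (exps d n)"
proof -
  let ?g = "\<lambda>(g::nat\<Rightarrow>nat) k. if k \<in> {1..n} then g k else 0"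
  have sub: "exps d n \<subseteq> ?g ` (PiE {1..n} (\<lambda>_. {..d}))"
  proof
    fix a assume a: "a \<in> exps d n"
    have le: "a k \<le> d" if "k \<in> {1..n}" for k
    proof -
      have "a k \<le> (\<Sum>j=1..n. a j)" using that by (intro member_le_sum) auto
      also have "\<dots> \<le> d" using exps_sum[OF a] .
      finally show ?thesis .
    qed
    have "a = ?g (restrict a {1..n})"
    proof (rule ext)
      fix k show "a k = ?g (restrict a {1..n}) k"
      proof (cases "k \<in> {1..n}")
        case True then show ?thesis by simp
      next
        case False
        have "?g (restrict a {1..n}) k = 0" using False by (simp only: if_False if_not_P)
        then show ?thesis using exps_support[OF a False] by simp
      qed
    qed
    moreover have "restrict a {1..n} \<in> PiE {1..n} (\<lambda>_. {..d})"
      unfolding restrict_PiE_iff using le by simp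
    ultimately show "a \<in> ?g ` (PiE {1..n} (\<lambda>_. {..d}))" by (rule image_eqI)
  qed
  have fin: "finite (PiE {1..n} (\<lambda>_. {..d::nat}))" by (rule finite_PiE) simp_all
  show ?thesis by (rule finite_subset[OF sub finite_imageI[OF fin]])
qed

lemma monom_H_alt:
  assumes "\<And>k. k \<notin> {1..n} \<Longrightarrow> a k = 0"
  shows "monom_H e a f = (\<Prod>k\<in>{1..n}. (f \<bullet> e k) ^ a k)"
  unfolding monom_H_def
proof (rule prod.mono_neutral_left)
  show "{k. 1 \<le> k \<and> a k \<noteq> 0} \<subseteq> {1..n}" using assms by force
qed (use assms in auto)

lemma P_const: "(\<lambda>f. c) \<in> P_dn e d n"
proof -
  let ?z = "(\<lambda>_. 0) :: nat \<Rightarrow> nat"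
  have z: "?z \<in> exps d n" by (rule exps_I) auto
  have m: "monom_H e ?z f = 1" for f unfolding monom_H_def by simp
  have "(\<Sum>a\<in>exps d n. (if a = ?z then c else 0) * monom_H e a f) = c" for f
  proof -
    have "(\<Sum>a\<in>exps d n. (if a = ?z then c else 0) * monom_H e a f)
        = (\<Sum>a\<in>exps d n. if a = ?z then c * monom_H e a f else 0)"
      by (intro sum.cong) auto
    also have "\<dots> = c" using z exps_finite[of d n] m by (simp add: sum.delta')
    finally show ?thesis .
  qed
  then have "(\<lambda>f. c) = (\<lambda>f. \<Sum>a\<in>exps d n. (if a = ?z then c else 0) * monom_H e a f)"
    by (intro ext) (rule sym)
  then show ?thesis unfolding P_dn_def by (intro CollectI exI)
qed

lemma P_add: assumes "p \<in> P_dn e d n" "q \<in> P_dn e d n" shows "(\<lambda>f. p f + q f) \<in> P_dn e d n"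
proof -
  have "\<exists>c. p = (\<lambda>f. \<Sum>a\<in>exps d n. c a * monom_H e a f)" using assms(1) unfolding P_dn_def by simp
  then obtain c where c: "p = (\<lambda>f. \<Sum>a\<in>exps d n. c a * monom_H e a f)" by (elim exE)
  have "\<exists>c. q = (\<lambda>f. \<Sum>a\<in>exps d n. c a * monom_H e a f)" using assms(2) unfolding P_dn_def by simp
  then obtain c' where c': "q = (\<lambda>f. \<Sum>a\<in>exps d n. c' a * monom_H e a f)" by (elim exE)
  show ?thesis unfolding P_dn_def c c'
    by (intro CollectI exI[of _ "\<lambda>a. c a + c' a"]) (simp add: sum.distrib[symmetric] algebra_simps)
qed

lemma P_scale: assumes "p \<in> P_dn e d n" shows "(\<lambda>f. r * p f) \<in> P_dn e d n"
proof -
  have "\<exists>c. p = (\<lambda>f. \<Sum>a\<in>exps d n. c a * monom_H e a f)" using assms unfolding P_dn_def by simp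
  then obtain c where c: "p = (\<lambda>f. \<Sum>a\<in>exps d n. c a * monom_H e a f)" by (elim exE)
  show ?thesis unfolding P_dn_def c
    by (intro CollectI exI[of _ "\<lambda>a. r * c a"]) (simp add: sum_distrib_left algebra_simps)
qed

lemma P_diff: "p \<in> P_dn e d n \<Longrightarrow> q \<in> P_dn e d n \<Longrightarrow> (\<lambda>f. p f - q f) \<in> P_dn e d n"
  using P_add[of p e d n "\<lambda>f. (-1) * q f"] P_scale[of q e d n "-1"] by simp

lemma P_mono: assumes "d \<le> d'" "p \<in> P_dn e d n" shows "p \<in> P_dn e d' n"
proof -
  have "\<exists>c. p = (\<lambda>f. \<Sum>a\<in>exps d n. c a * monom_H e a f)" using assms(2) unfolding P_dn_def by simp
  then obtain c where c: "p = (\<lambda>f. \<Sum>a\<in>exps d n. c a * monom_H e a f)" by (elim exE)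
  have sub: "exps d n \<subseteq> exps d' n"
  proof
    fix a assume a: "a \<in> exps d n"
    show "a \<in> exps d' n"
    proof (rule exps_I)
      fix k assume "k \<notin> {1..n}" then show "a k = 0" by (rule exps_support[OF a])
    next
      show "(\<Sum>k=1..n. a k) \<le> d'" using exps_sum[OF a] assms(1) by (rule le_trans)
    qed
  qed
  have "(\<Sum>a\<in>exps d' n. (if a \<in> exps d n then c a else 0) * monom_H e a f)
      = (\<Sum>a\<in>exps d n. c a * monom_H e a f)" for f
    by (rule sum.mono_neutral_cong_right[OF exps_finite sub]) simp_all
  then have "p = (\<lambda>f. \<Sum>a\<in>exps d' n. (if a \<in> exps d n then c a else 0) * monom_H e a f)"
    unfolding c by (intro ext) (rule sym)
  then show ?thesis unfolding P_dn_def by (intro CollectI exI)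
qed

lemma P_coord: assumes "k \<in> {1..n}" shows "(\<lambda>f. f \<bullet> e k) \<in> P_dn e 1 n"
proof -
  let ?a = "(\<lambda>j. if j = k then 1 else 0) :: nat \<Rightarrow> nat"
  have a: "?a \<in> exps 1 n"
  proof (rule exps_I)
    fix j assume j: "j \<notin> {1..n}"
    then have "j \<noteq> k" using assms by blast
    then show "?a j = 0" by simp
  next
    have "(\<Sum>j=1..n. ?a j) = 1" by (simp only: sum.delta[OF finite_atLeastAtMost] if_P[OF assms])
    then show "(\<Sum>j=1..n. ?a j) \<le> 1" by simp
  qed
  have m: "monom_H e ?a f = f \<bullet> e k" for f
  proof -
    have "{j. 1 \<le> j \<and> ?a j \<noteq> 0} = {k}"
    proof (intro set_eqI iffI)
      fix j assume "j \<in> {j. 1 \<le> j \<and> ?a j \<noteq> 0}"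
      then have "?a j \<noteq> 0" by simp
      then show "j \<in> {k}" by (cases "j = k") simp_all
    next
      fix j assume "j \<in> {k}"
      then show "j \<in> {j. 1 \<le> j \<and> ?a j \<noteq> 0}" using assms by simp
    qed
    then show ?thesis unfolding monom_H_def by simp
  qed
  have "(\<Sum>b\<in>exps 1 n. (if b = ?a then 1 else 0) * monom_H e b f) = f \<bullet> e k" for f
  proof -
    have "(\<Sum>b\<in>exps 1 n. (if b = ?a then 1 else 0) * monom_H e b f)
        = (\<Sum>b\<in>exps 1 n. if b = ?a then monom_H e b f else 0)"
      by (intro sum.cong refl) simp
    also have "\<dots> = monom_H e ?a f"
      by (simp only: sum.delta[OF exps_finite] if_P[OF a])
    also have "\<dots> = f \<bullet> e k" by (rule m)
    finally show ?thesis .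
  qed
  then have "(\<lambda>f. f \<bullet> e k) = (\<lambda>f. \<Sum>b\<in>exps 1 n. (if b = ?a then 1 else 0) * monom_H e b f)"
    by (intro ext) (rule sym)
  then show ?thesis unfolding P_dn_def by (intro CollectI exI)
qed

lemma P_mult:
  assumes "p \<in> P_dn e d1 n" "q \<in> P_dn e d2 n"
  shows "(\<lambda>f. p f * q f) \<in> P_dn e (d1 + d2) n"
proof -
  have "\<exists>c. p = (\<lambda>f. \<Sum>a\<in>exps d1 n. c a * monom_H e a f)" using assms(1) unfolding P_dn_def by simp
  then obtain c where c: "p = (\<lambda>f. \<Sum>a\<in>exps d1 n. c a * monom_H e a f)" by (elim exE)
  have "\<exists>c. q = (\<lambda>f. \<Sum>a\<in>exps d2 n. c a * monom_H e a f)" using assms(2) unfolding P_dn_def by simp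
  then obtain c' where c': "q = (\<lambda>f. \<Sum>a\<in>exps d2 n. c' a * monom_H e a f)" by (elim exE)
  define S where "S = exps d1 n \<times> exps d2 n"
  define g where "g = (\<lambda>(x::(nat\<Rightarrow>nat)\<times>(nat\<Rightarrow>nat)) k. fst x k + snd x k)"
  define C where "C = (\<lambda>y. \<Sum>x\<in>{x\<in>S. g x = y}. c (fst x) * c' (snd x))"
  have finS: "finite S" unfolding S_def by (intro finite_cartesian_product exps_finite)
  have gS: "g ` S \<subseteq> exps (d1+d2) n"
  proof
    fix y assume "y \<in> g ` S"
    then obtain x where x: "x \<in> S" "y = g x" by blast
    obtain a b where ab: "x = (a,b)" by (cases x)
    have a: "a \<in> exps d1 n" and b: "b \<in> exps d2 n" using x ab unfolding S_def by simp_all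
    have y: "y = (\<lambda>k. a k + b k)" using x ab unfolding g_def by simp
    have "(\<Sum>k=1..n. a k + b k) \<le> d1 + d2"
      unfolding sum.distrib using exps_sum[OF a] exps_sum[OF b] by (rule add_mono)
    then show "y \<in> exps (d1+d2) n" unfolding y
    proof (rule exps_I[rotated])
      fix k assume k: "k \<notin> {1..n}"
      show "a k + b k = 0" using exps_support[OF a k] exps_support[OF b k] by simp
    qed
  qed
  have mm: "monom_H e (fst x) f * monom_H e (snd x) f = monom_H e (g x) f" if "x \<in> S" for x f
  proof -
    obtain a b where ab0: "x = (a,b)" by (cases x)
    have ab: "x = (a,b)" "a \<in> exps d1 n" "b \<in> exps d2 n" using that ab0 unfolding S_def by simp_all
    have gx: "g x \<in> exps (d1+d2) n" using gS that by blast
    have m1: "monom_H e a f = (\<Prod>k\<in>{1..n}. (f \<bullet> e k) ^ a k)"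
      by (rule monom_H_alt) (rule exps_support[OF ab(2)])
    have m2: "monom_H e b f = (\<Prod>k\<in>{1..n}. (f \<bullet> e k) ^ b k)"
      by (rule monom_H_alt) (rule exps_support[OF ab(3)])
    have m3: "monom_H e (g x) f = (\<Prod>k\<in>{1..n}. (f \<bullet> e k) ^ g x k)"
      by (rule monom_H_alt) (rule exps_support[OF gx])
    have gx': "\<And>k. g x k = a k + b k" using ab(1) by (simp add: g_def)
    have "monom_H e (fst x) f * monom_H e (snd x) f = monom_H e a f * monom_H e b f"
      using ab(1) by simp
    also have "\<dots> = (\<Prod>k\<in>{1..n}. (f \<bullet> e k) ^ a k * (f \<bullet> e k) ^ b k)"
      unfolding m1 m2 by (rule prod.distrib[symmetric])
    also have "\<dots> = (\<Prod>k\<in>{1..n}. (f \<bullet> e k) ^ g x k)"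
      unfolding gx' by (simp only: power_add)
    finally show ?thesis unfolding m3 .
  qed
  have eq: "p f * q f = (\<Sum>y\<in>exps (d1+d2) n. C y * monom_H e y f)" for f
  proof -
    have "p f * q f = (\<Sum>a\<in>exps d1 n. \<Sum>b\<in>exps d2 n. c a * c' b * (monom_H e a f * monom_H e b f))"
      unfolding c c' sum_product by (simp add: mult_ac)
    also have "\<dots> = (\<Sum>x\<in>S. c (fst x) * c' (snd x) * (monom_H e (fst x) f * monom_H e (snd x) f))"
      unfolding S_def sum.cartesian_product by (simp add: case_prod_unfold)
    also have "\<dots> = (\<Sum>x\<in>S. c (fst x) * c' (snd x) * monom_H e (g x) f)"
      by (intro sum.cong refl) (simp add: mm)
    also have "\<dots> = (\<Sum>y\<in>exps (d1+d2) n. \<Sum>x\<in>{x\<in>S. g x = y}. c (fst x) * c' (snd x) * monom_H e (g x) f)"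
      by (rule sum.group[symmetric, OF finS exps_finite gS])
    also have "\<dots> = (\<Sum>y\<in>exps (d1+d2) n. C y * monom_H e y f)"
      unfolding C_def sum_distrib_right by (intro sum.cong refl) simp
    finally show ?thesis .
  qed
  have "(\<lambda>f. p f * q f) = (\<lambda>f. \<Sum>y\<in>exps (d1+d2) n. C y * monom_H e y f)"
    by (rule ext) (rule eq)
  then show ?thesis unfolding P_dn_def by (intro CollectI exI)
qed

lemma P_sum: "finite S \<Longrightarrow> (\<And>i. i \<in> S \<Longrightarrow> p i \<in> P_dn e d n) \<Longrightarrow> (\<lambda>f. \<Sum>i\<in>S. p i f) \<in> P_dn e d n"
proof (induction S rule: finite_induct)
  case empty then show ?case using P_const[of 0] by simp
next
  case (insert x F) then show ?case using P_add[of "p x" e d n "\<lambda>f. \<Sum>i\<in>F. p i f"] by simp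
qed

fun cheb :: "nat \<Rightarrow> real \<Rightarrow> real" where
  "cheb 0 x = 1"
| "cheb (Suc 0) x = x"
| "cheb (Suc (Suc k)) x = 2 * x * cheb (Suc k) x - cheb k x"

lemma nat_induct2: "P 0 \<Longrightarrow> P (Suc 0) \<Longrightarrow> (\<And>k. P k \<Longrightarrow> P (Suc k) \<Longrightarrow> P (Suc (Suc k))) \<Longrightarrow> P n"
  using cheb.induct[of "\<lambda>k _. P k" n 0] by blast

lemma P_cheb: assumes "g \<in> P_dn e 2 n" shows "(\<lambda>f. cheb k (g f)) \<in> P_dn e (2*k) n"
proof (induction k rule: nat_induct2)
  case 1 then show ?case using P_const by simp
next
  case 2 then show ?case using assms by simp
next
  case (3 k)
  have a: "(\<lambda>f. g f * cheb (Suc k) (g f)) \<in> P_dn e (2 + 2 * Suc k) n"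
    by (rule P_mult[OF assms 3(2)])
  have b: "(\<lambda>f. cheb k (g f)) \<in> P_dn e (2 + 2 * Suc k) n"
    by (rule P_mono[OF _ 3(1)]) simp
  have "(\<lambda>f. 2 * (g f * cheb (Suc k) (g f)) - cheb k (g f)) \<in> P_dn e (2 + 2 * Suc k) n"
    by (intro P_diff P_scale a b)
  then show ?case by (simp add: algebra_simps)
qed

lemma cheb_cos: "cheb k (cos t) = cos (real k * t)"
proof (induction k rule: nat_induct2)
  case (3 k)
  have "cos (real (Suc (Suc k)) * t) + cos (real k * t) = 2 * cos t * cos (real (Suc k) * t)"
  proof -
    have "cos (real (Suc (Suc k)) * t) = cos (real (Suc k) * t + t)" by (simp add: algebra_simps)
    moreover have "cos (real k * t) = cos (real (Suc k) * t - t)" by (simp add: algebra_simps)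
    ultimately show ?thesis by (simp add: cos_add cos_diff)
  qed
  then show ?case using 3 by simp
qed simp_all

lemma cheb_bound: "\<bar>x\<bar> \<le> 1 \<Longrightarrow> \<bar>cheb k x\<bar> \<le> 1"
  using cheb_cos[of k "arccos x"] cos_arccos[of x] by auto

lemma cheb_closed: assumes "(\<alpha>::real) \<noteq> 0" shows "cheb k ((\<alpha> + inverse \<alpha>) / 2) = (\<alpha> ^ k + inverse \<alpha> ^ k) / 2"
proof (induction k rule: nat_induct2)
  case (3 k)
  define \<beta> where "\<beta> = inverse \<alpha>"
  have ab: "\<alpha> * \<beta> = 1" using assms unfolding \<beta>_def by simp
  have e1: "\<alpha> * \<beta> ^ Suc k = \<beta> ^ k" using ab by (simp add: power_Suc mult.assoc[symmetric])
  have e2: "\<beta> * \<alpha> ^ Suc k = \<alpha> ^ k" using ab by (simp add: power_Suc mult.assoc[symmetric] mult.commute)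
  have "cheb (Suc (Suc k)) ((\<alpha> + \<beta>) / 2) = 2 * ((\<alpha> + \<beta>) / 2) * cheb (Suc k) ((\<alpha> + \<beta>) / 2) - cheb k ((\<alpha> + \<beta>) / 2)"
    by (simp only: cheb.simps)
  also have "\<dots> = 2 * ((\<alpha> + \<beta>) / 2) * ((\<alpha> ^ Suc k + \<beta> ^ Suc k) / 2) - (\<alpha> ^ k + \<beta> ^ k) / 2"
    unfolding \<beta>_def by (simp only: 3)
  also have "\<dots> = (\<alpha> + \<beta>) * ((\<alpha> ^ Suc k + \<beta> ^ Suc k) / 2) - (\<alpha> ^ k + \<beta> ^ k) / 2"
    by simp
  also have "\<dots> = (\<alpha> * \<alpha> ^ Suc k + \<beta> * \<beta> ^ Suc k + \<alpha> * \<beta> ^ Suc k + \<beta> * \<alpha> ^ Suc k) / 2 - (\<alpha> ^ k + \<beta> ^ k) / 2"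
    by (simp add: algebra_simps)
  also have "\<dots> = (\<alpha> ^ Suc (Suc k) + \<beta> ^ Suc (Suc k)) / 2"
    unfolding e1 e2 by (simp add: field_simps)
  finally show ?case unfolding \<beta>_def .
qed simp_all

lemma cs_quad:
  fixes A B C :: real
  assumes "\<And>t. 0 \<le> A + 2*t*B + t^2*C" "0 \<le> C"
  shows "B^2 \<le> A*C"
proof (cases "C = 0")
  case True
  show ?thesis
  proof (rule ccontr)
    assume "\<not> ?thesis"
    then have "B \<noteq> 0" using True by simp
    have "0 \<le> A + 2*(-(A+1)/(2*B))*B + (-(A+1)/(2*B))^2*C" by (rule assms(1))
    also have "\<dots> = -1" using True \<open>B \<noteq> 0\<close> by (simp add: field_simps)
    finally show False by simp
  qed
next
  case False
  then have C: "C > 0" using assms(2) by simp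
  have "0 \<le> A + 2*(-B/C)*B + (-B/C)^2*C" by (rule assms(1))
  also have "\<dots> = A - B^2/C" using C by (simp add: field_simps power2_eq_square)
  finally have "B^2/C \<le> A" by simp
  then show ?thesis using C by (simp add: field_simps)
qed

lemma proj_e_inner:
  assumes orth: "\<forall>i\<ge>1. \<forall>j\<ge>1. e i \<bullet> e j = (if i = j then 1 else 0)" and j: "j \<in> {1..n}"
  shows "e j \<bullet> proj_n e n x = x \<bullet> e j"
proof -
  have "e j \<bullet> proj_n e n x = (\<Sum>k=1..n. (x \<bullet> e k) * (e j \<bullet> e k))"
    unfolding proj_n_def by (simp add: inner_sum_right)
  also have "\<dots> = (\<Sum>k=1..n. if k = j then x \<bullet> e k else 0)"
    using orth j by (intro sum.cong refl) auto
  also have "\<dots> = x \<bullet> e j" using j by (simp add: sum.delta')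
  finally show ?thesis .
qed

lemma proj_norm2:
  assumes orth: "\<forall>i\<ge>1. \<forall>j\<ge>1. e i \<bullet> e j = (if i = j then 1 else 0)"
  shows "(norm (proj_n e n x))^2 = (\<Sum>k=1..n. (x \<bullet> e k)^2)"
    and "x \<bullet> proj_n e n x = (\<Sum>k=1..n. (x \<bullet> e k)^2)"
proof -
  have "(norm (proj_n e n x))^2 = proj_n e n x \<bullet> proj_n e n x" by (simp add: power2_norm_eq_inner)
  also have "\<dots> = (\<Sum>k=1..n. (x \<bullet> e k) * (e k \<bullet> proj_n e n x))"
    unfolding proj_n_def[of e n x] by (simp add: inner_sum_left)
  also have "\<dots> = (\<Sum>k=1..n. (x \<bullet> e k)^2)"
    using proj_e_inner[OF orth] by (intro sum.cong refl) (simp add: power2_eq_square)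
  finally show "(norm (proj_n e n x))^2 = (\<Sum>k=1..n. (x \<bullet> e k)^2)" .
  show "x \<bullet> proj_n e n x = (\<Sum>k=1..n. (x \<bullet> e k)^2)"
    unfolding proj_n_def by (simp add: inner_sum_right power2_eq_square)
qed

lemma proj_bessel:
  assumes orth: "\<forall>i\<ge>1. \<forall>j\<ge>1. e i \<bullet> e j = (if i = j then 1 else 0)"
  shows "norm (proj_n e n x) \<le> norm x"
proof (cases "norm (proj_n e n x) = 0")
  case False
  have "(norm (proj_n e n x))^2 = x \<bullet> proj_n e n x" using proj_norm2[OF orth] by simp
  also have "\<dots> \<le> norm x * norm (proj_n e n x)" by (rule norm_cauchy_schwarz)
  finally have "norm (proj_n e n x) * norm (proj_n e n x) \<le> norm x * norm (proj_n e n x)"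
    by (simp add: power2_eq_square)
  then show ?thesis using False by (simp add: mult_le_cancel_right)
qed simp

lemma proj_add: "proj_n e n (x + y) = proj_n e n x + proj_n e n y"
  unfolding proj_n_def by (simp add: inner_add_left scaleR_add_left sum.distrib)

lemma two_powr_le: assumes "0 \<le> (\<rho>::real)" "\<rho> \<le> 1" shows "2 powr \<rho> \<le> 1 + \<rho>"
proof -
  have cv: "convex_on UNIV (\<lambda>x. exp (ln 2 * x))" by (rule convex_on_exp) simp
  have "exp (ln 2 * ((1 - \<rho>) * 0 + \<rho> * 1)) \<le> (1 - \<rho>) * exp (ln 2 * 0) + \<rho> * exp (ln 2 * 1)"
    using convex_onD[OF cv, of \<rho> 0 1] assms by simp
  then show ?thesis by (simp add: powr_def mult.commute algebra_simps)
qed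

lemma numeric:
  fixes m D \<delta> :: real and d :: nat
  assumes "0 < m" "0 < D" "0 < \<delta>" "\<delta> \<le> m"
  shows "2 powr (\<delta> / (\<delta> + D) * real d - 3) \<le> ((2*m+D)/D)^(2*(d div 2)) / 4"
proof -
  define \<rho> where "\<rho> = m / (m + D)"
  define \<alpha> where "\<alpha> = (2*m+D)/D"
  have \<rho>0: "0 \<le> \<rho>" and \<rho>1: "\<rho> \<le> 1" using assms unfolding \<rho>_def by auto
  have \<rho>\<delta>: "\<delta> / (\<delta> + D) \<le> \<rho>"
    unfolding \<rho>_def using assms by (simp add: field_simps mult_right_mono)
  have apos: "0 < \<alpha>" using assms unfolding \<alpha>_def by simp
  have a1: "1 + \<rho> \<le> \<alpha>"
  proof -
    have "m / (m + D) \<le> 2 * m / D" using assms by (simp add: field_simps)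
    then show ?thesis unfolding \<rho>_def \<alpha>_def using assms by (simp add: add_divide_distrib)
  qed
  have a2: "2 powr \<rho> \<le> \<alpha>" using two_powr_le[OF \<rho>0 \<rho>1] a1 by linarith
  define k where "k = d div 2"
  have kd: "real d - 1 \<le> real (2*k)" unfolding k_def by linarith
  have "\<alpha> ^ (2*k) = \<alpha> powr real (2*k)" by (rule powr_realpow[symmetric, OF apos])
  also have "\<dots> \<ge> (2 powr \<rho>) powr real (2*k)" by (rule powr_mono2) (use a2 in auto)
  finally have s1: "2 powr (\<rho> * real (2*k)) \<le> \<alpha> ^ (2*k)" by (simp add: powr_powr)
  have "\<rho> * real d - 1 \<le> \<rho> * real (2*k)"
  proof -
    have "\<rho> * (real d - 1) \<le> \<rho> * real (2*k)" using kd \<rho>0 by (rule mult_left_mono)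
    then show ?thesis using \<rho>1 by (simp add: algebra_simps)
  qed
  then have s2: "2 powr (\<rho> * real d - 1) \<le> \<alpha> ^ (2*k)" using s1 by (meson order_trans powr_mono one_le_numeral)
  have "2 powr (\<delta> / (\<delta> + D) * real d - 3) \<le> 2 powr (\<rho> * real d - 3)"
  proof -
    have "\<delta> / (\<delta> + D) * real d \<le> \<rho> * real d" by (rule mult_right_mono[OF \<rho>\<delta>]) simp
    then show ?thesis by (intro powr_mono) simp_all
  qed
  also have "\<dots> = 2 powr (\<rho> * real d - 1) / 4"
  proof -
    have p2: "(2::real) powr 2 = 4" by simp
    have "(2::real) powr (\<rho> * real d - 1) = 2 powr ((\<rho> * real d - 3) + 2)"
      by (rule arg_cong[where f="\<lambda>x. (2::real) powr x"]) simp
    also have "\<dots> = 2 powr (\<rho> * real d - 3) * 2 powr 2" by (rule powr_add)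
    finally have "(2::real) powr (\<rho> * real d - 1) = 2 powr (\<rho> * real d - 3) * 2 powr 2" .
    then show ?thesis unfolding p2 by simp
  qed
  also have "\<dots> \<le> \<alpha> ^ (2*k) / 4" using s2 by simp
  finally show ?thesis unfolding \<alpha>_def k_def .
qed

lemma CD_key:
  fixes \<mu> :: "'a::real_normed_vector measure" and v :: "'a \<Rightarrow> real ^ 'i::finite"
    and c :: "'i \<Rightarrow> real"
  assumes prob: "prob_space \<mu>" and sets: "sets \<mu> = sets (restrict_space borel F)" and cF: "compact F"
    and vc: "\<And>i. continuous_on UNIV (\<lambda>f. v f $ i)"
    and inv: "invertible (moment_matrix \<mu> v)"
    and qb: "\<And>f. f \<in> F \<Longrightarrow> \<bar>\<Sum>i\<in>UNIV. c i * v f $ i\<bar> \<le> 1"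
  shows "(\<Sum>i\<in>UNIV. c i * v h $ i)^2 \<le> CD_poly \<mu> v h"
proof -
  interpret prob_space \<mu> by (rule prob)
  have sp: "space \<mu> = F" using sets_eq_imp_space_eq[OF sets] by (simp add: space_restrict_space)
  have intg: "integrable \<mu> g" if gc: "continuous_on UNIV g" for g :: "'a \<Rightarrow> real"
  proof -
    have "g \<in> borel_measurable (restrict_space borel F)"
      by (rule measurable_restrict_space1[OF borel_measurable_continuous_onI[OF gc]])
    then have meas: "g \<in> borel_measurable \<mu>" by (simp add: measurable_cong_sets[OF sets refl])
    have "compact (g ` F)" by (rule compact_continuous_image[OF continuous_on_subset[OF gc subset_UNIV] cF])
    then have "bounded (g ` F)" by (rule compact_imp_bounded)
    then obtain B where B: "\<forall>y\<in>g ` F. norm y \<le> B" unfolding bounded_iff by (elim exE)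
    have "AE x in \<mu>. norm (g x) \<le> B"
    proof (rule AE_I2)
      fix x assume "x \<in> space \<mu>"
      then have xF: "x \<in> F" using sp by simp
      show "norm (g x) \<le> B" by (rule B[rule_format, OF imageI[OF xF]])
    qed
    then show ?thesis using meas by (rule integrable_const_bound)
  qed
  define M where "M = moment_matrix \<mu> v"
  have Mij: "M $ i $ j = (\<integral>f. v f $ i * v f $ j \<partial>\<mu>)" for i j unfolding M_def moment_matrix_def by simp
  have intvv: "integrable \<mu> (\<lambda>f. v f $ i * v f $ j)" for i j
    by (rule intg) (intro continuous_on_mult vc)
  have quad: "x \<bullet> (M *v z) = (\<integral>f. (x \<bullet> v f) * (z \<bullet> v f) \<partial>\<mu>)" for x z
  proof -
    have "x \<bullet> (M *v z) = (\<Sum>i\<in>UNIV. x$i * (\<Sum>j\<in>UNIV. M$i$j * z$j))"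
      by (simp add: inner_vec_def matrix_vector_mult_def)
    also have "\<dots> = (\<Sum>i\<in>UNIV. \<Sum>j\<in>UNIV. (\<integral>f. x$i * z$j * (v f $ i * v f $ j) \<partial>\<mu>))"
      unfolding Mij integral_mult_right_zero sum_distrib_left by (simp add: mult_ac)
    also have "\<dots> = (\<Sum>i\<in>UNIV. (\<integral>f. (\<Sum>j\<in>UNIV. x$i * z$j * (v f $ i * v f $ j)) \<partial>\<mu>))"
    proof (rule sum.cong[OF refl])
      fix i
      show "(\<Sum>j\<in>UNIV. (\<integral>f. x$i * z$j * (v f $ i * v f $ j) \<partial>\<mu>)) = (\<integral>f. (\<Sum>j\<in>UNIV. x$i * z$j * (v f $ i * v f $ j)) \<partial>\<mu>)"
        using Bochner_Integration.integral_sum[where I=UNIV and M=\<mu> and f="\<lambda>j f. x$i * z$j * (v f $ i * v f $ j)"] intvv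
        by simp
    qed
    also have "\<dots> = (\<integral>f. (\<Sum>i\<in>UNIV. \<Sum>j\<in>UNIV. x$i * z$j * (v f $ i * v f $ j)) \<partial>\<mu>)"
      using Bochner_Integration.integral_sum[where I=UNIV and M=\<mu> and f="\<lambda>i f. \<Sum>j\<in>UNIV. x$i * z$j * (v f $ i * v f $ j)"] intvv
      by simp
    also have "\<dots> = (\<integral>f. (x \<bullet> v f) * (z \<bullet> v f) \<partial>\<mu>)"
      by (intro Bochner_Integration.integral_cong refl) (simp add: inner_vec_def sum_product mult_ac)
    finally show ?thesis .
  qed
  have psd: "0 \<le> x \<bullet> (M *v x)" for x
    unfolding quad by (rule Bochner_Integration.integral_nonneg) simp
  have sym: "x \<bullet> (M *v z) = z \<bullet> (M *v x)" for x z
    unfolding quad by (simp add: mult.commute)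
  have MN: "M ** matrix_inv M = mat 1"
    using someI_ex[OF inv[unfolded invertible_def]] unfolding M_def matrix_inv_def by simp
  define w where "w = v h"
  define y where "y = matrix_inv M *v w"
  have My: "M *v y = w" unfolding y_def matrix_vector_mul_assoc MN by simp
  have CD: "CD_poly \<mu> v h = y \<bullet> (M *v y)"
  proof -
    have "CD_poly \<mu> v h = w \<bullet> y" unfolding CD_poly_def M_def w_def y_def by (rule refl)
    also have "\<dots> = y \<bullet> (M *v y)" unfolding My by (rule inner_commute)
    finally show ?thesis .
  qed
  define cv where "cv = (\<chi> i. c i)"
  have qh: "(\<Sum>i\<in>UNIV. c i * v h $ i) = cv \<bullet> (M *v y)"
    unfolding My cv_def w_def inner_vec_def by simp
  have A1: "cv \<bullet> (M *v cv) \<le> 1"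
  proof -
    have "cv \<bullet> (M *v cv) = (\<integral>f. (cv \<bullet> v f) * (cv \<bullet> v f) \<partial>\<mu>)" by (rule quad)
    also have "\<dots> \<le> 1"
    proof (rule integral_le_const)
      show "integrable \<mu> (\<lambda>f. (cv \<bullet> v f) * (cv \<bullet> v f))"
        unfolding inner_vec_def by (rule intg) (intro continuous_intros vc)
      show "AE f in \<mu>. (cv \<bullet> v f) * (cv \<bullet> v f) \<le> 1"
      proof (rule AE_I2)
        fix f assume "f \<in> space \<mu>"
        then have "f \<in> F" using sp by simp
        then have "\<bar>cv \<bullet> v f\<bar> \<le> 1" using qb unfolding cv_def inner_vec_def by simp
        then have "\<bar>cv \<bullet> v f\<bar> * \<bar>cv \<bullet> v f\<bar> \<le> 1 * 1" by (intro mult_mono) simp_all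
        then show "(cv \<bullet> v f) * (cv \<bullet> v f) \<le> 1" by (simp add: abs_mult[symmetric])
      qed
    qed
    finally show ?thesis .
  qed
  define A where "A = cv \<bullet> (M *v cv)"
  define B where "B = cv \<bullet> (M *v y)"
  define C where "C = y \<bullet> (M *v y)"
  have "0 \<le> A + 2*t*B + t^2*C" for t
  proof -
    have "0 \<le> (cv + t *\<^sub>R y) \<bullet> (M *v (cv + t *\<^sub>R y))" by (rule psd)
    also have "\<dots> = cv \<bullet> (M *v cv) + t * (cv \<bullet> (M *v y)) + t * (y \<bullet> (M *v cv)) + t * t * (y \<bullet> (M *v y))"
      by (simp add: matrix_vector_right_distrib matrix_vector_mult_scaleR inner_add_left inner_add_right algebra_simps)
    also have "\<dots> = A + 2*t*B + t^2*C"
      unfolding A_def B_def C_def sym[of y cv] by (simp add: power2_eq_square)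
    finally show ?thesis .
  qed
  moreover have "0 \<le> C" unfolding C_def by (rule psd)
  ultimately have "B^2 \<le> A*C" by (rule cs_quad)
  also have "\<dots> \<le> 1 * C" using A1 \<open>0 \<le> C\<close> unfolding A_def by (intro mult_right_mono) simp_all
  finally show ?thesis unfolding qh CD B_def C_def by simp
qed

lemma P_cont: assumes "p \<in> P_dn e d n" shows "continuous_on UNIV p"
proof -
  have "\<exists>c. p = (\<lambda>f. \<Sum>a\<in>exps d n. c a * monom_H e a f)" using assms unfolding P_dn_def by simp
  then obtain c where c: "p = (\<lambda>f. \<Sum>a\<in>exps d n. c a * monom_H e a f)" by (elim exE)
  show ?thesis unfolding c monom_H_def by (intro continuous_intros)
qed

lemma alpha_identity: fixes m D :: real assumes "0 < m" "0 < D"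
  shows "((m+D)^2 + m^2) / ((m+D)^2 - m^2) = ((2*m+D)/D + inverse ((2*m+D)/D)) / 2"
proof -
  have q: "(m+D)^2 - m^2 = D*(D+2*m)" by (simp add: power2_eq_square algebra_simps)
  have nz1: "D \<noteq> 0" "2*m+D \<noteq> 0" "D+2*m \<noteq> 0" using assms by simp_all
  have "((2*m+D)/D + inverse ((2*m+D)/D)) / 2 = ((2*m+D)/D + D/(2*m+D)) / 2" by simp
  also have "\<dots> = ((2*m+D)*(2*m+D) + D*D) / (2*(D*(2*m+D)))"
    using nz1 by (simp add: add_frac_eq)
  also have "\<dots> = (2*((m+D)^2 + m^2)) / (2*(D*(D+2*m)))"
    by (simp add: power2_eq_square algebra_simps)
  also have "\<dots> = ((m+D)^2 + m^2) / (D*(D+2*m))"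
    by (rule mult_divide_mult_cancel_left) simp
  finally show ?thesis unfolding q by (rule sym)
qed

theorem lemma5:
  fixes e :: "nat \<Rightarrow> 'a::{real_inner,complete_space}"
    and F :: "'a set" and \<mu> :: "'a measure"
    and d n :: nat and v :: "'a \<Rightarrow> real ^ 'i::finite"
    and h :: 'a and \<delta> :: real
  assumes "complete_orthonormal_system e"
    and "compact F"
    and "prob_space \<mu>" and "sets \<mu> = sets (restrict_space borel F)"
    and "is_basis_vec v (P_dn e d n)"
    and "invertible (moment_matrix \<mu> v)"
    and "\<delta> > 0"
    and "\<forall>f\<in>F. norm (proj_n e n (f - h)) \<ge> \<delta>"
  shows "CD_poly \<mu> v h \<ge> 2 powr (\<delta> / (\<delta> + diameter F) * real d - 3)"
proof -
  have orth: "\<forall>i\<ge>1. \<forall>j\<ge>1. e i \<bullet> e j = (if i = j then 1 else 0)"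
    using assms(1) unfolding complete_orthonormal_system_def by simp
  have sp: "space \<mu> = F" using sets_eq_imp_space_eq[OF assms(4)] by (simp add: space_restrict_space)
  have Fne: "F \<noteq> {}" using prob_space.not_empty[OF assms(3)] sp by simp
  have vP: "\<And>i. (\<lambda>f. v f $ i) \<in> P_dn e d n" using assms(5) unfolding is_basis_vec_def by simp
  have rep: "\<And>p. p \<in> P_dn e d n \<Longrightarrow> \<exists>c. p = (\<lambda>f. \<Sum>i\<in>UNIV. c i * v f $ i)"
    using assms(5) unfolding is_basis_vec_def by simp
  have vc: "\<And>i. continuous_on UNIV (\<lambda>f. v f $ i)" by (rule P_cont[OF vP])
  have KEY: "(q h)^2 \<le> CD_poly \<mu> v h" if qP: "q \<in> P_dn e d n" and qb: "\<And>f. f \<in> F \<Longrightarrow> \<bar>q f\<bar> \<le> 1" for q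
  proof -
    obtain c where c: "q = (\<lambda>f. \<Sum>i\<in>UNIV. c i * v f $ i)" using rep[OF qP] by (elim exE)
    have qb': "\<And>f. f \<in> F \<Longrightarrow> \<bar>\<Sum>i\<in>UNIV. c i * v f $ i\<bar> \<le> 1" using qb unfolding c by simp
    have "(\<Sum>i\<in>UNIV. c i * v h $ i)^2 \<le> CD_poly \<mu> v h"
      by (rule CD_key[OF assms(3) assms(4) assms(2) vc assms(6) qb'])
    then show ?thesis unfolding c by simp
  qed
  define r where "r = (\<lambda>f. norm (proj_n e n (f - h)))"
  have rc: "continuous_on F r" unfolding r_def proj_n_def by (intro continuous_intros)
  obtain f0 where f0: "f0 \<in> F" "\<forall>y\<in>F. r f0 \<le> r y"
    using continuous_attains_inf[OF assms(2) Fne rc] by (elim bexE)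
  define m where "m = r f0"
  have m\<delta>: "\<delta> \<le> m" using assms(8)[rule_format, OF f0(1)] unfolding m_def r_def .
  have m0: "0 < m" using m\<delta> assms(7) by simp
  define D where "D = diameter F"
  have bF: "bounded F" by (rule compact_imp_bounded[OF assms(2)])
  have dist: "dist f f0 \<le> D" if "f \<in> F" for f unfolding D_def by (rule diameter_bounded_bound[OF bF that f0(1)])
  have D0: "0 \<le> D" using dist[OF f0(1)] by simp
  have rlo: "m \<le> r f" if "f \<in> F" for f using f0(2)[rule_format, OF that] unfolding m_def .
  have rhi: "r f \<le> m + D" if "f \<in> F" for f
  proof -
    have "proj_n e n (f - h) = proj_n e n (f - f0) + proj_n e n (f0 - h)"
      using proj_add[of e n "f - f0" "f0 - h"] by simp
    then have "r f \<le> norm (proj_n e n (f - f0)) + r f0" unfolding r_def by (simp add: norm_triangle_ineq)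
    moreover have "norm (proj_n e n (f - f0)) \<le> norm (f - f0)" by (rule proj_bessel[OF orth])
    moreover have "norm (f - f0) \<le> D" using dist[OF that] by (simp add: dist_norm)
    ultimately show ?thesis unfolding m_def by linarith
  qed
  define s where "s = (\<lambda>f. \<Sum>k=1..n. (f \<bullet> e k - h \<bullet> e k)^2)"
  have s_r: "s f = (r f)^2" for f unfolding s_def r_def proj_norm2(1)[OF orth] by (simp add: inner_diff_left)
  have sh: "s h = 0" unfolding s_def by simp
  have sP: "s \<in> P_dn e 2 n"
  proof -
    have termP: "(\<lambda>f. (f \<bullet> e k - h \<bullet> e k) * (f \<bullet> e k - h \<bullet> e k)) \<in> P_dn e 2 n" if "k \<in> {1..n}" for k
    proof -
      have "(\<lambda>f. (f \<bullet> e k - h \<bullet> e k) * (f \<bullet> e k - h \<bullet> e k)) \<in> P_dn e (1+1) n"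
        by (rule P_mult[OF P_diff[OF P_coord[OF that, of e] P_const[of "h \<bullet> e k"]] P_diff[OF P_coord[OF that, of e] P_const[of "h \<bullet> e k"]]])
      then show ?thesis by (simp only: one_add_one)
    qed
    have "(\<lambda>f. \<Sum>k\<in>{1..n}. (f \<bullet> e k - h \<bullet> e k) * (f \<bullet> e k - h \<bullet> e k)) \<in> P_dn e 2 n"
      by (rule P_sum[OF finite_atLeastAtMost termP])
    then show ?thesis unfolding s_def by (simp add: power2_eq_square)
  qed
  have CD1: "1 \<le> CD_poly \<mu> v h" using KEY[OF P_const[of 1]] by simp
  show ?thesis
  proof (cases "D = 0")
    case True
    show ?thesis
    proof (cases "d \<le> 1")
      case True
      have r1: "\<delta> / (\<delta> + D) \<le> 1" using \<open>D = 0\<close> assms(7) by simp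
      have r2: "real d \<le> 1" using True by simp
      have "\<delta> / (\<delta> + D) * real d \<le> 1" by (rule mult_le_one[OF r1 _ r2]) (use assms(7) D0 in simp)
      then have "2 powr (\<delta> / (\<delta> + D) * real d - 3) \<le> 2 powr 0" by (intro powr_mono) simp_all
      then show ?thesis using CD1 unfolding D_def by simp
    next
      case False
      have qP: "(\<lambda>f. K * (1 - (1 / m^2) * s f)) \<in> P_dn e d n" for K
        using P_mono[OF _ P_scale[OF P_diff[OF P_const[of 1] P_scale[OF sP, of "1 / m^2"]], of K]] False by simp
      have qz: "K * (1 - (1 / m^2) * s f) = 0" if "f \<in> F" for f K
      proof -
        have "r f = m" using rlo[OF that] rhi[OF that] \<open>D = 0\<close> by simp
        then have "s f = m^2" using s_r by simp
        then show ?thesis using m0 by simp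
      qed
      have "K^2 \<le> CD_poly \<mu> v h" for K
      proof -
        have bd: "\<bar>K * (1 - (1 / m^2) * s f)\<bar> \<le> 1" if "f \<in> F" for f
          unfolding qz[OF that] by simp
        have "(K * (1 - (1 / m^2) * s h))^2 \<le> CD_poly \<mu> v h"
          by (rule KEY[OF qP[of K] bd])
        then show ?thesis unfolding sh by simp
      qed
      then have "(\<bar>CD_poly \<mu> v h\<bar> + 1)^2 \<le> CD_poly \<mu> v h" by blast
      moreover have "\<bar>CD_poly \<mu> v h\<bar> + 1 \<le> (\<bar>CD_poly \<mu> v h\<bar> + 1)^2"
      proof -
        have X1: "1 \<le> \<bar>CD_poly \<mu> v h\<bar> + 1" by simp
        have "(\<bar>CD_poly \<mu> v h\<bar> + 1) * 1 \<le> (\<bar>CD_poly \<mu> v h\<bar> + 1) * (\<bar>CD_poly \<mu> v h\<bar> + 1)"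
          by (rule mult_left_mono[OF X1]) simp
        then show ?thesis by (simp add: power2_eq_square)
      qed
      ultimately show ?thesis by simp
    qed
  next
    case False
    then have Dp: "0 < D" using D0 by simp
    define a where "a = m^2"
    define b where "b = (m + D)^2"
    have ba: "0 < b - a"
    proof -
      have "b - a = D * (D + 2 * m)" unfolding a_def b_def by (simp add: power2_eq_square algebra_simps)
      moreover have "0 < D * (D + 2 * m)" using m0 Dp by (intro mult_pos_pos) simp_all
      ultimately show ?thesis by simp
    qed
    define g where "g = (\<lambda>f. (b + a) / (b - a) + (-2 / (b - a)) * s f)"
    have gP: "g \<in> P_dn e 2 n" unfolding g_def by (rule P_add[OF P_const P_scale[OF sP]])
    define k where "k = d div 2"
    have qP: "(\<lambda>f. cheb k (g f)) \<in> P_dn e d n"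
      by (rule P_mono[OF _ P_cheb[OF gP]]) (simp add: k_def)
    have qb: "\<bar>cheb k (g f)\<bar> \<le> 1" if "f \<in> F" for f
    proof (rule cheb_bound)
      have "m^2 \<le> (r f)^2" using rlo[OF that] m0 by (intro power_mono) simp_all
      moreover have "(r f)^2 \<le> (m + D)^2" using rhi[OF that] m0 rlo[OF that] by (intro power_mono) simp_all
      ultimately have sab: "a \<le> s f" "s f \<le> b" unfolding a_def b_def s_r by simp_all
      have "g f = (b + a) / (b - a) - (2 * s f) / (b - a)" unfolding g_def by simp
      also have "\<dots> = (b + a - 2 * s f) / (b - a)" by (rule diff_divide_distrib[symmetric])
      finally have "g f = (b + a - 2 * s f) / (b - a)" .
      moreover have "\<bar>b + a - 2 * s f\<bar> \<le> b - a" using sab by (simp add: abs_le_iff)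
      ultimately show "\<bar>g f\<bar> \<le> 1" using ba by (simp add: abs_divide divide_le_eq)
    qed
    define \<alpha> where "\<alpha> = (2*m + D) / D"
    have apos: "0 < \<alpha>" unfolding \<alpha>_def using m0 Dp by simp
    have gh: "g h = (\<alpha> + inverse \<alpha>) / 2"
    proof -
      have "g h = (b + a) / (b - a)" unfolding g_def sh by simp
      also have "\<dots> = (\<alpha> + inverse \<alpha>) / 2"
        unfolding a_def b_def \<alpha>_def by (rule alpha_identity[OF m0 Dp])
      finally show ?thesis .
    qed
    have qh: "cheb k (g h) = (\<alpha> ^ k + inverse \<alpha> ^ k) / 2"
      unfolding gh by (rule cheb_closed) (use apos in simp)
    have lb: "\<alpha> ^ k / 2 \<le> cheb k (g h)" unfolding qh using apos by simp
    have "(\<alpha> ^ k / 2)^2 \<le> (cheb k (g h))^2"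
      by (rule power_mono[OF lb]) (use apos in simp)
    also have "\<dots> \<le> CD_poly \<mu> v h" using KEY[OF qP qb] by simp
    finally have c1: "(\<alpha> ^ k / 2)^2 \<le> CD_poly \<mu> v h" .
    have c2: "(\<alpha> ^ k / 2)^2 = \<alpha> ^ (2*k) / 4"
      by (simp add: power_divide power_mult[symmetric] mult.commute)
    have c3: "\<alpha> ^ (2*k) / 4 \<le> CD_poly \<mu> v h" using c1 unfolding c2 .
    have nm: "2 powr (\<delta> / (\<delta> + D) * real d - 3) \<le> \<alpha> ^ (2*k) / 4"
      unfolding \<alpha>_def k_def by (rule numeric[OF m0 Dp assms(7) m\<delta>])
    show ?thesis using order_trans[OF nm c3] unfolding D_def .
  qed
qed

end
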